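(* Let $k$ be a positive integer. If $H$ is a thickened $4k$-star, then $\mathrm{ecrw}(H)\ge k$.
   Context: A thickened $n$-star is the graph $S_{n,n}$ obtained from the star $K_{1,n}$ by replacing each edge with $n$ internally vertex-disjoint paths of length 2; explicitly, vertices $c$, $u_1,\dots,u_n$ and $v_{i,j}$ ($i,j\in[n]$), with edges $cv_{i,j}$ and $u_iv_{i,j}$. A tree-cut decomposition of a graph $G$ is a pair $\mathcal{T}=(T,\{X_t\}_{t\in V(T)})$ where $T$ is a tree and the bags $X_t\subseteq V(G)$ are pairwise disjoint (possibly empty) with $\bigcup_{t\in V(T)}X_t=V(G)$. For a node $t$ of $T$, let $T_1,\dots,T_m$ be the connected components of $T-t$ and $Z_i=\bigcup_{s\in V(T_i)}X_s$; $\mathrm{cross}_{\mathcal{T}}(t)$ is the number of edges of $G$ whose two endpoints lie in two distinct sets among $Z_1,\dots,Z_m$ (if $T$ has one node, $\mathrm{cross}_{\mathcal T}(t)=0$). The crossing number of $\mathcal{T}$ is $\max_{t}\mathrm{cross}_{\mathcal{T}}(t)$, and the thickness of $\mathcal{T}$ is $\max_t|X_t|$. The edge-crossing width of $\mathcal T$ is the maximum of its crossing number and its thickness, and $\mathrm{ecrw}(G)$ is the minimum edge-crossing width over all tree-cut decompositions of $G$. *)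

theory Defs
  imports Main
begin

(* Simple graphs: vertex set V :: 'v set, edge set E :: 'v set set (2-element sets). *)

datatype tsvert = Ctr | U nat | W nat nat

definition tstar_V :: "nat \<Rightarrow> tsvert set" where
  "tstar_V n = {Ctr} \<union> {U i | i. i \<in> {1..n}} \<union> {W i j | i j. i \<in> {1..n} \<and> j \<in> {1..n}}"

definition tstar_E :: "nat \<Rightarrow> tsvert set set" where
  "tstar_E n = {{Ctr, W i j} | i j. i \<in> {1..n} \<and> j \<in> {1..n}}
             \<union> {{U i, W i j} | i j. i \<in> {1..n} \<and> j \<in> {1..n}}"

definition tree_adj :: "nat set set \<Rightarrow> nat set \<Rightarrow> nat \<Rightarrow> nat \<Rightarrow> bool" where
  "tree_adj TE S s s' \<longleftrightarrow> {s, s'} \<in> TE \<and> s \<in> S \<and> s' \<in> S"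

definition is_tree :: "nat set \<Rightarrow> nat set set \<Rightarrow> bool" where
  "is_tree N TE \<longleftrightarrow> finite N \<and> N \<noteq> {} \<and>
     (\<forall>e\<in>TE. card e = 2 \<and> e \<subseteq> N) \<and>
     (\<forall>s\<in>N. \<forall>s'\<in>N. (tree_adj TE N)\<^sup>*\<^sup>* s s') \<and>
     card TE + 1 = card N"

definition same_comp :: "nat set \<Rightarrow> nat set set \<Rightarrow> nat \<Rightarrow> nat \<Rightarrow> nat \<Rightarrow> bool" where
  "same_comp N TE t s s' \<longleftrightarrow> (tree_adj TE (N - {t}))\<^sup>*\<^sup>* s s'"

definition is_tcd :: "'v set \<Rightarrow> nat set \<Rightarrow> nat set set \<Rightarrow> (nat \<Rightarrow> 'v set) \<Rightarrow> bool" where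
  "is_tcd V N TE X \<longleftrightarrow> is_tree N TE \<and>
     (\<forall>s\<in>N. \<forall>s'\<in>N. s \<noteq> s' \<longrightarrow> X s \<inter> X s' = {}) \<and>
     (\<Union>s\<in>N. X s) = V"

definition cross :: "'v set set \<Rightarrow> nat set \<Rightarrow> nat set set \<Rightarrow> (nat \<Rightarrow> 'v set) \<Rightarrow> nat \<Rightarrow> nat" where
  "cross E N TE X t = card {e \<in> E. \<exists>u v s s'. e = {u, v} \<and> s \<in> N - {t} \<and> s' \<in> N - {t}
        \<and> u \<in> X s \<and> v \<in> X s' \<and> \<not> same_comp N TE t s s'}"

definition ecw :: "'v set set \<Rightarrow> nat set \<Rightarrow> nat set set \<Rightarrow> (nat \<Rightarrow> 'v set) \<Rightarrow> nat" where
  "ecw E N TE X = max (Max ((cross E N TE X) ` N)) (Max ((\<lambda>t. card (X t)) ` N))"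

definition ecrw :: "'v set \<Rightarrow> 'v set set \<Rightarrow> nat" where
  "ecrw V E = Inf {ecw E N TE X | N TE X. is_tcd V N TE X}"

end

theory Submission
  imports Defs
begin

lemma adj_sym: "tree_adj TE S a b \<Longrightarrow> tree_adj TE S b a"
  by (auto simp: tree_adj_def insert_commute)

lemma rt_sym: "(tree_adj TE S)\<^sup>*\<^sup>* a b \<Longrightarrow> (tree_adj TE S)\<^sup>*\<^sup>* b a"
proof (induction rule: rtranclp_induct)
  case base then show ?case by simp
next
  case (step y z) then show ?case by (meson adj_sym converse_rtranclp_into_rtranclp)
qed

lemma rt_mono: assumes "S \<subseteq> S'"
  shows "(tree_adj TE S)\<^sup>*\<^sup>* a b \<Longrightarrow> (tree_adj TE S')\<^sup>*\<^sup>* a b"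
proof (induction rule: rtranclp_induct)
  case base show ?case by simp
next
  case (step y z)
  have "tree_adj TE S' y z" using step(2) assms by (auto simp: tree_adj_def)
  with step(3) show ?case by (rule rtranclp.rtrancl_into_rtrancl)
qed

lemma exit_lemma: "(tree_adj TE S)\<^sup>*\<^sup>* a b \<Longrightarrow> b = t0 \<Longrightarrow> a \<noteq> t0 \<Longrightarrow>
  \<exists>s. s \<in> S - {t0} \<and> tree_adj TE S s t0 \<and> (tree_adj TE (S - {t0}))\<^sup>*\<^sup>* a s"
proof (induction rule: converse_rtranclp_induct)
  case base then show ?case by simp
next
  case (step a a')
  show ?case
  proof (cases "a' = t0")
    case True then show ?thesis using step(1) step.prems
      by (intro exI[of _ a]) (auto simp: tree_adj_def)
  next
    case False
    then obtain s where s: "s \<in> S - {t0}" "tree_adj TE S s t0" "(tree_adj TE (S - {t0}))\<^sup>*\<^sup>* a' s"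
      using step by blast
    have "tree_adj TE (S - {t0}) a a'" using step(1) False step.prems by (auto simp: tree_adj_def)
    then show ?thesis using s by (meson converse_rtranclp_into_rtranclp)
  qed
qed

lemma conn_card:
  fixes F :: "nat set set"
  assumes fin: "finite N" "finite F" and r: "r \<in> N" and conn: "\<forall>x\<in>N. (tree_adj F N)\<^sup>*\<^sup>* x r"
  shows "card N \<le> card F + 1"
proof -
  let ?R = "tree_adj F N"
  define d where "d x = (LEAST m. (?R ^^ m) x r)" for x
  have ex: "\<exists>y. ?R x y \<and> d y < d x" if x: "x \<in> N" "x \<noteq> r" for x
  proof -
    have "?R\<^sup>*\<^sup>* x r" using conn x(1) by blast
    from rtranclp_imp_relpowp[OF this] obtain m where m: "(?R ^^ m) x r" by blast
    have dx: "(?R ^^ d x) x r" unfolding d_def by (rule LeastI[of _ m]) (rule m)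
    have "d x \<noteq> 0"
    proof
      assume "d x = 0"
      then have "x = r" using dx by (metis relpowp_0_E)
      then show False using x by simp
    qed
    then obtain m' where dm: "d x = Suc m'" using not0_implies_Suc by blast
    have "(?R ^^ Suc m') x r" using dx unfolding dm .
    from relpowp_Suc_D2[OF this] obtain y where y: "?R x y" "(?R ^^ m') y r" by blast
    have "d y \<le> m'" unfolding d_def by (rule Least_le) (rule y(2))
    then have "d y < d x" using dm by simp
    then show ?thesis using y(1) by blast
  qed
  define g where "g x = (SOME y. ?R x y \<and> d y < d x)" for x
  have g: "?R x (g x) \<and> d (g x) < d x" if "x \<in> N" "x \<noteq> r" for x
    unfolding g_def using someI_ex[OF ex[OF that]] .
  have inj: "inj_on (\<lambda>x. {x, g x}) (N - {r})"
  proof (rule inj_onI)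
    fix x x' assume x: "x \<in> N - {r}" and x': "x' \<in> N - {r}" and eq: "{x, g x} = {x', g x'}"
    show "x = x'"
    proof (rule ccontr)
      assume ne: "x \<noteq> x'"
      then have e1: "x = g x'" and e2: "x' = g x" using eq ne by (auto simp: doubleton_eq_iff)
      have "d (g x) < d x" using g[of x] x by blast
      then have a: "d x' < d x" using e2 by simp
      have "d (g x') < d x'" using g[of x'] x' by blast
      then have b: "d x < d x'" using e1 by simp
      from a b show False by linarith
    qed
  qed
  have "(\<lambda>x. {x, g x}) ` (N - {r}) \<subseteq> F"
  proof
    fix e assume "e \<in> (\<lambda>x. {x, g x}) ` (N - {r})"
    then obtain x where x: "x \<in> N" "x \<noteq> r" "e = {x, g x}" by blast
    have "?R x (g x)" using g[OF x(1,2)] by blast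
    then show "e \<in> F" using x(3) by (simp add: tree_adj_def)
  qed
  then have "card (N - {r}) \<le> card F" using card_inj_on_le[OF inj] fin(2) by blast
  moreover have "card (N - {r}) = card N - 1" using r fin(1) by (simp add: card_Diff_singleton)
  ultimately show ?thesis by linarith
qed
lemma uniq:
  assumes tree: "is_tree N TE" and t0: "t0 \<in> N" and "s \<in> N" "s' \<in> N" "s \<noteq> t0" "s' \<noteq> t0"
    and e1: "{s, t0} \<in> TE" and e2: "{s', t0} \<in> TE"
    and p: "(tree_adj TE (N - {t0}))\<^sup>*\<^sup>* s' s"
  shows "s = s'"
proof (rule ccontr)
  assume ne: "s \<noteq> s'"
  define F where "F = TE - {{s, t0}}"
  have finN: "finite N" and conn: "\<forall>a\<in>N. \<forall>b\<in>N. (tree_adj TE N)\<^sup>*\<^sup>* a b"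
    and cardT: "card TE + 1 = card N" and sub: "\<forall>e\<in>TE. card e = 2 \<and> e \<subseteq> N"
    using tree by (auto simp: is_tree_def)
  have "TE \<subseteq> Pow N" using sub by auto
  then have finT: "finite TE" using finN finite_subset by blast
  have lift: "tree_adj F N a b" if "tree_adj TE (N - {t0}) a b" for a b
    using that by (auto simp: tree_adj_def F_def doubleton_eq_iff)
  have pF: "(tree_adj F N)\<^sup>*\<^sup>* s' s"
    using p by (induction rule: rtranclp_induct) (auto intro: rtranclp.rtrancl_into_rtrancl lift)
  have e2F: "tree_adj F N s' t0" using e2 ne assms by (auto simp: tree_adj_def F_def doubleton_eq_iff)
  have st0: "(tree_adj F N)\<^sup>*\<^sup>* s t0" using rt_sym[OF pF] e2F by (meson rtranclp.rtrancl_into_rtrancl)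
  have stepF: "(tree_adj F N)\<^sup>*\<^sup>* a b" if "tree_adj TE N a b" for a b
  proof (cases "{a,b} = {s,t0}")
    case True
    then have "(a = s \<and> b = t0) \<or> (a = t0 \<and> b = s)" by (auto simp: doubleton_eq_iff)
    then show ?thesis using st0 rt_sym by blast
  next
    case False
    have "tree_adj F N a b" using that False by (simp add: tree_adj_def F_def)
    then show ?thesis by blast
  qed
  have allc: "(tree_adj F N)\<^sup>*\<^sup>* a t0" if "a \<in> N" for a
  proof -
    have "(tree_adj TE N)\<^sup>*\<^sup>* a t0" using conn that t0 by blast
    then show ?thesis
      by (induction rule: rtranclp_induct) (auto intro: rtranclp_trans stepF)
  qed
  have "card N \<le> card F + 1" using conn_card[OF finN _ t0] finT allc F_def by auto
  moreover have "card F = card TE - 1" using e1 finT by (simp add: F_def card_Diff_singleton)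
  moreover have "card TE \<ge> 1" using e1 finT card_0_eq by fastforce
  ultimately show False using cardT by linarith
qed

lemma tstar_V_sub: "tstar_V n \<subseteq> {Ctr} \<union> U ` {1..n} \<union> (\<lambda>(i,j). W i j) ` ({1..n} \<times> {1..n})"
  by (auto simp: tstar_V_def)

lemma fin_V: "finite (tstar_V n)"
  by (rule finite_subset[OF tstar_V_sub]) auto

lemma fin_E: "finite (tstar_E n)"
proof -
  have "tstar_E n \<subseteq> Pow (tstar_V n)" by (auto simp: tstar_E_def tstar_V_def)
  then show ?thesis using fin_V finite_subset by blast
qed

lemma memE1: "i \<in> {1..n} \<Longrightarrow> j \<in> {1..n} \<Longrightarrow> {U i, W i j} \<in> tstar_E n"
  unfolding tstar_E_def by (rule UnI2) blast

lemma memE2: "i \<in> {1..n} \<Longrightarrow> j \<in> {1..n} \<Longrightarrow> {Ctr, W i j} \<in> tstar_E n"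
  unfolding tstar_E_def by (rule UnI1) blast

lemma key:
  assumes tcd: "is_tcd (tstar_V n) N TE X" and n: "n = 4*k"
    and cr: "\<forall>t\<in>N. cross (tstar_E n) N TE X t < k" and th: "\<forall>t\<in>N. card (X t) < k"
  shows False
proof -
  let ?V = "tstar_V n" let ?E = "tstar_E n"
  have tree: "is_tree N TE" and cov: "(\<Union>s\<in>N. X s) = ?V"
    using tcd by (auto simp: is_tcd_def)
  have conn: "\<forall>a\<in>N. \<forall>b\<in>N. (tree_adj TE N)\<^sup>*\<^sup>* a b" using tree by (auto simp: is_tree_def)
  have finX: "finite (X t)" if "t \<in> N" for t
  proof -
    have "X t \<subseteq> ?V" using cov that by blast
    then show ?thesis using fin_V finite_subset by blast
  qed
  have "Ctr \<in> ?V" by (simp add: tstar_V_def)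
  then obtain t0 where t0: "t0 \<in> N" "Ctr \<in> X t0" using cov by blast
  have "\<exists>i\<in>{1..n}. U i \<notin> X t0"
  proof (rule ccontr)
    assume "\<not> ?thesis"
    then have "U ` {1..n} \<subseteq> X t0" by auto
    then have "card (U ` {1..n}) \<le> card (X t0)" using card_mono[OF finX[OF t0(1)]] by blast
    moreover have "card (U ` {1..n}) = n" by (simp add: card_image inj_on_def)
    ultimately show False using th t0 n by fastforce
  qed
  then obtain i where i: "i \<in> {1..n}" "U i \<notin> X t0" by blast
  have "U i \<in> ?V" using i by (auto simp: tstar_V_def)
  then obtain s1 where s1: "s1 \<in> N" "U i \<in> X s1" using cov by blast
  have s1t0: "s1 \<noteq> t0" using s1 i by auto
  obtain s where s: "s \<in> N - {t0}" "tree_adj TE N s t0" "(tree_adj TE (N - {t0}))\<^sup>*\<^sup>* s1 s"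
    using exit_lemma[of TE N s1 t0 t0] conn s1 t0 s1t0 by blast
  have st0E: "{s, t0} \<in> TE" using s by (simp add: tree_adj_def)
  define Ws where "Ws = W i ` {1..n}"
  have cardWs: "card Ws = n" by (simp add: Ws_def card_image inj_on_def)
  have WsV: "Ws \<subseteq> ?V" using i by (auto simp: Ws_def tstar_V_def)
  define A where "A = Ws \<inter> X t0"
  define B where "B = {w \<in> Ws. \<exists>x\<in>N-{t0}. w \<in> X x \<and> \<not> same_comp N TE t0 s1 x}"
  define C where "C = {w \<in> Ws. \<exists>x\<in>N-{t0}. w \<in> X x \<and> same_comp N TE t0 s1 x}"
  have finWs: "finite Ws" by (simp add: Ws_def)
  have cover: "Ws \<subseteq> A \<union> B \<union> C"
  proof
    fix w assume w: "w \<in> Ws"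
    then obtain x where "x \<in> N" "w \<in> X x" using WsV cov by blast
    then show "w \<in> A \<union> B \<union> C" using w by (cases "x = t0") (auto simp: A_def B_def C_def)
  qed
  have cA: "card A < k"
  proof -
    have "card A \<le> card (X t0)" using finX[OF t0(1)] by (simp add: A_def card_mono)
    then show ?thesis using th t0 by fastforce
  qed
  define crs where "crs t = {e \<in> ?E. \<exists>u v s s'. e = {u, v} \<and> s \<in> N - {t} \<and> s' \<in> N - {t}
        \<and> u \<in> X s \<and> v \<in> X s' \<and> \<not> same_comp N TE t s s'}" for t
  have crs_card: "card (crs t) < k" if "t \<in> N" for t using cr that by (simp add: crs_def cross_def)
  have fincrs: "finite (crs t)" for t using fin_E by (simp add: crs_def)
  have cB: "card B < k"
  proof -
    have inj: "inj_on (\<lambda>w. {U i, w}) B" by (auto simp: inj_on_def B_def Ws_def doubleton_eq_iff)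
    have "(\<lambda>w. {U i, w}) ` B \<subseteq> crs t0"
    proof
      fix e assume "e \<in> (\<lambda>w. {U i, w}) ` B"
      then obtain w x where w: "e = {U i, w}" "w \<in> Ws" "x \<in> N - {t0}" "w \<in> X x"
        "\<not> same_comp N TE t0 s1 x" by (auto simp: B_def)
      have "e \<in> ?E" using w(1,2) i memE1 by (auto simp: Ws_def)
      moreover have "\<exists>u v s s'. e = {u, v} \<and> s \<in> N - {t0} \<and> s' \<in> N - {t0}
        \<and> u \<in> X s \<and> v \<in> X s' \<and> \<not> same_comp N TE t0 s s'"
        apply (rule exI[of _ "U i"], rule exI[of _ w], rule exI[of _ s1], rule exI[of _ x])
        using w s1 s1t0 by simp
      ultimately show "e \<in> crs t0" unfolding crs_def by (intro CollectI conjI)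
    qed
    then have "card B \<le> card (crs t0)" using card_inj_on_le[OF inj] fincrs by blast
    then show ?thesis using crs_card[OF t0(1)] by linarith
  qed
  have finABC: "finite (A \<union> B \<union> C)" using finWs by (auto simp: A_def B_def C_def)
  have "n \<le> card (A \<union> B \<union> C)" using cardWs card_mono[OF finABC cover] by simp
  also have "\<dots> \<le> card A + card B + card C" by (meson card_Un_le le_trans add_le_mono1)
  finally have cC: "2*k < card C" using cA cB n by linarith
  have noreach: "\<not> same_comp N TE s t0 x"
    if x: "x \<in> N - {t0}" "x \<noteq> s" "same_comp N TE t0 s1 x" for x
  proof
    assume "same_comp N TE s t0 x"
    then have "(tree_adj TE (N - {s}))\<^sup>*\<^sup>* x t0" by (simp add: same_comp_def rt_sym)
    then obtain s'' where s'': "s'' \<in> N - {s} - {t0}" "tree_adj TE (N - {s}) s'' t0"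
        "(tree_adj TE (N - {s} - {t0}))\<^sup>*\<^sup>* x s''"
      using exit_lemma[of TE "N - {s}" x t0 t0] x by blast
    have "(tree_adj TE (N - {t0}))\<^sup>*\<^sup>* x s''" using rt_mono[of "N - {s} - {t0}" "N - {t0}"] s''(3) by blast
    then have "(tree_adj TE (N - {t0}))\<^sup>*\<^sup>* s'' s" using x(3) s(3) unfolding same_comp_def
      by (meson rt_sym rtranclp_trans)
    moreover have "{s'', t0} \<in> TE" using s'' by (simp add: tree_adj_def)
    ultimately have "s = s''" using uniq[OF tree t0(1) _ _ _ _ st0E] s s'' by blast
    then show False using s'' by auto
  qed
  have cCs: "card (C - X s) < k"
  proof -
    have inj: "inj_on (\<lambda>w. {Ctr, w}) (C - X s)" by (auto simp: inj_on_def C_def Ws_def doubleton_eq_iff)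
    have "(\<lambda>w. {Ctr, w}) ` (C - X s) \<subseteq> crs s"
    proof
      fix e assume "e \<in> (\<lambda>w. {Ctr, w}) ` (C - X s)"
      then obtain w x where w: "e = {Ctr, w}" "w \<in> Ws" "x \<in> N - {t0}" "w \<in> X x"
        "same_comp N TE t0 s1 x" "w \<notin> X s" by (auto simp: C_def)
      have xs: "x \<noteq> s" using w by auto
      have "e \<in> ?E" using w(1,2) i memE2 by (auto simp: Ws_def)
      moreover have nr: "\<not> same_comp N TE s t0 x" using noreach[OF w(3) xs w(5)] .
      moreover have "\<exists>u v s' s''. e = {u, v} \<and> s' \<in> N - {s} \<and> s'' \<in> N - {s}
        \<and> u \<in> X s' \<and> v \<in> X s'' \<and> \<not> same_comp N TE s s' s''"
        apply (rule exI[of _ Ctr], rule exI[of _ w], rule exI[of _ t0], rule exI[of _ x])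
        using w t0 s xs nr by simp
      ultimately show "e \<in> crs s" unfolding crs_def by (intro CollectI conjI)
    qed
    then have "card (C - X s) \<le> card (crs s)" using card_inj_on_le[OF inj] fincrs by blast
    then show ?thesis using crs_card s by fastforce
  qed
  have cCi: "card (C \<inter> X s) < k"
  proof -
    have "card (C \<inter> X s) \<le> card (X s)" using finX s by (simp add: card_mono)
    then show ?thesis using th s by fastforce
  qed
  have finC: "finite C" using finWs by (auto simp: C_def)
  have "card C \<le> card (C \<inter> X s) + card (C - X s)"
    by (metis Int_Diff_Un card_Un_le)
  then show False using cC cCs cCi by linarith
qed

theorem lemma3p15:
  fixes k :: nat
  assumes "k \<ge> 1"
  shows "ecrw (tstar_V (4 * k)) (tstar_E (4 * k)) \<ge> k"
proof -
  let ?S = "{ecw (tstar_E (4*k)) N TE X | N TE X. is_tcd (tstar_V (4*k)) N TE X}"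
  have "is_tcd (tstar_V (4*k)) {0} {} (\<lambda>_. tstar_V (4*k))"
    unfolding is_tcd_def is_tree_def by simp
  then have ne: "?S \<noteq> {}" by blast
  have lb: "k \<le> w" if "w \<in> ?S" for w
  proof (rule ccontr)
    assume "\<not> k \<le> w"
    then have wk: "w < k" by simp
    from that obtain N TE X where w: "w = ecw (tstar_E (4*k)) N TE X" and tcd: "is_tcd (tstar_V (4*k)) N TE X"
      by blast
    have finN: "finite N" using tcd by (simp add: is_tcd_def is_tree_def)
    have "\<forall>t\<in>N. cross (tstar_E (4*k)) N TE X t < k"
    proof
      fix t assume t: "t \<in> N"
      have "cross (tstar_E (4*k)) N TE X t \<le> Max (cross (tstar_E (4*k)) N TE X ` N)"
        using finN t by simp
      then show "cross (tstar_E (4*k)) N TE X t < k" using w wk by (simp add: ecw_def)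
    qed
    moreover have "\<forall>t\<in>N. card (X t) < k"
    proof
      fix t assume t: "t \<in> N"
      have "card (X t) \<le> Max ((\<lambda>t. card (X t)) ` N)"
        using finN t by simp
      then show "card (X t) < k" using w wk by (simp add: ecw_def)
    qed
    ultimately show False using key[OF tcd refl] by blast
  qed
  show ?thesis unfolding ecrw_def by (rule cInf_greatest[OF ne]) (rule lb)
qed

end
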